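(* Let $G$, $H\sqsubseteq G$, the local supervisors $I=\{1,\dots,n\}$ with observable sets $\Sigma_{o,i}$, controllable sets $\Sigma_{c,i}$ and delay bounds $N_{o,i}\in\mathbb{N}$ be as described in the context, and let $\sigma\in\Sigma_c$. Then $\mathcal{L}(H)$ is delay coobservable w.r.t. $N_{o,1},\ldots,N_{o,n}$, $\sigma$, and $\mathcal{L}(G)$ if and only if the following holds: for every $s\in\mathcal{L}(H)$ with $s\sigma\in\mathcal{L}(G)\setminus\mathcal{L}(H)$, and for every tuple $(s_i)_{i\in I^c(\sigma)}\in\mathcal{T}^{\sigma}_{conf}(s)$, there exists $i\in I^c(\sigma)$ such that $s_i\sigma\notin\mathcal{L}(H^{aug}_{N_{o,i}})$.
   Context: $G=(Q,\Sigma,\delta,\Gamma,q_0,Q_m)$ is a deterministic finite automaton with finite state set $Q$, finite event set $\Sigma$, partial transition function $\delta$ (extended to strings as usual), active event sets $\Gamma(q)=\{e\in\Sigma:\delta(q,e)\text{ defined}\}$, initial state $q_0$; $\mathcal{L}(G)$ is its generated language. $H=(Q_H,\Sigma,\delta_H,\Gamma_H,q_0,Q_{m,H})$ is a sub-automaton of $G$ (obtained from $G$ by deleting some states and all transitions attached to them); $\mathcal{L}(H)$ is the specification language. For a string $s$, $|s|$ is its length, $s_{-m}$ is the prefix of $s$ of length $\max\{0,|s|-m\}$, and $\Sigma^{\le M}$ is the set of strings of length at most $M$. There are $n$ local supervisors indexed by $I=\{1,\dots,n\}$; supervisor $i$ has observable events $\Sigma_{o,i}\subseteq\Sigma$, unobservable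 events $\Sigma_{uo,i}=\Sigma\setminus\Sigma_{o,i}$, controllable events $\Sigma_{c,i}\subseteq\Sigma$, and an observation delay bound $N_{o,i}\in\mathbb{N}$; $\Sigma_c=\bigcup_i\Sigma_{c,i}$, and for $\sigma\in\Sigma_c$, $I^c(\sigma)=\{i\in I:\sigma\in\Sigma_{c,i}\}$. $P_i$ is the natural projection onto $\Sigma_{o,i}^*$ (erasing events not in $\Sigma_{o,i}$). For $s\in\mathcal{L}(G)$, $\Theta_i^{N_{o,i}}(s)=\{P_i(s_{-m}):m\in[0,N_{o,i}]\}$; for $t\in\Sigma_{o,i}^*$, $(\Theta_i^{N_{o,i}})^{-1}(t)=\{u\in\mathcal{L}(G):t\in\Theta_i^{N_{o,i}}(u)\}$, both extended to sets elementwise. $\mathcal{L}(H)$ is delay coobservable w.r.t. $N_{o,1},\dots,N_{o,n}$, $\sigma\in\Sigma_c$, and $\mathcal{L}(G)$ if for every $s\in\mathcal{L}(H)$: $s\sigma\in\mathcal{L}(G)\setminus\mathcal{L}(H)$ implies that there exists $i\in I^c(\sigma)$ with $(\Theta_i^{N_{o,i}})^{-1}(\Theta_i^{N_{o,i}}(s))\sigma\cap\mathcal{L}(H)=\emptyset$. The augmented automaton $H^{aug}_{N}$ (for $N\in\mathbb{N}$) has states $Q_H\cup\{q_{dis}\}$, initial state $q_0$, and transitions: for $q\in Q_H$, $e\in\Sigma$, $\delta^{aug}(q,e)=\delta_H(q,e)$ if $e\in\Gamma_H(q)$; $\delta^{aug}(q,e)=q_{dis}$ if $e\notin\Gamma_H(q)$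 and there is $s'\in\Sigma^{\le N}$ with $\delta_H(q,s')$ defined and $e\in\Gamma_H(\delta_H(q,s'))$; undefined otherwise (no transitions leave $q_{dis}$). For $s\in\mathcal{L}(H)$ and $\sigma\in\Sigma_c$, $\mathcal{T}^{\sigma}_{conf}(s)$ is the set of tuples $(s_i)_{i\in I^c(\sigma)}$ of strings with $P_i(s_i)\in\Theta_i^{N_{o,i}}(s)$ for all $i\in I^c(\sigma)$. *)

theory Defs
  imports Main
begin

fun delta_star :: "('q \<Rightarrow> 'e \<Rightarrow> 'q option) \<Rightarrow> 'q \<Rightarrow> 'e list \<Rightarrow> 'q option" where
  "delta_star d q [] = Some q"
| "delta_star d q (e # s) = (case d q e of None \<Rightarrow> None | Some q' \<Rightarrow> delta_star d q' s)"

definition lang :: "('q \<Rightarrow> 'e \<Rightarrow> 'q option) \<Rightarrow> 'q \<Rightarrow> 'e list set" where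
  "lang d q0 = {s. delta_star d q0 s \<noteq> None}"

definition active :: "('q \<Rightarrow> 'e \<Rightarrow> 'q option) \<Rightarrow> 'q \<Rightarrow> 'e set" where
  "active d q = {e. d q e \<noteq> None}"

(* deterministic finite automaton (Q, Sig, delta, q0); marked states play no role here *)
definition dfa :: "'q set \<Rightarrow> 'e set \<Rightarrow> ('q \<Rightarrow> 'e \<Rightarrow> 'q option) \<Rightarrow> 'q \<Rightarrow> bool" where
  "dfa Q Sig d q0 \<longleftrightarrow> finite Q \<and> finite Sig \<and> q0 \<in> Q \<and>
     (\<forall>q e q'. d q e = Some q' \<longrightarrow> q \<in> Q \<and> e \<in> Sig \<and> q' \<in> Q)"

definition sub_delta :: "('q \<Rightarrow> 'e \<Rightarrow> 'q option) \<Rightarrow> 'q set \<Rightarrow> 'q \<Rightarrow> 'e \<Rightarrow> 'q option" where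
  "sub_delta d QH q e = (case d q e of None \<Rightarrow> None
       | Some q' \<Rightarrow> (if q \<in> QH \<and> q' \<in> QH then Some q' else None))"

(* augmented automaton H^aug_N : states Some q (q in QH) and None = q_dis *)
definition aug_delta :: "'e set \<Rightarrow> ('q \<Rightarrow> 'e \<Rightarrow> 'q option) \<Rightarrow> 'q set \<Rightarrow> nat
                          \<Rightarrow> 'q option \<Rightarrow> 'e \<Rightarrow> 'q option option" where
  "aug_delta Sig dH QH N x e = (case x of
      None \<Rightarrow> None
    | Some q \<Rightarrow>
        (if q \<in> QH \<and> e \<in> Sig then
           (if e \<in> active dH q then map_option Some (dH q e)
            else if (\<exists>s' \<in> lists Sig. length s' \<le> N \<and>
                       (\<exists>q'. delta_star dH q s' = Some q' \<and> e \<in> active dH q'))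
                 then Some None else None)
         else None))"

definition aug_lang :: "'e set \<Rightarrow> ('q \<Rightarrow> 'e \<Rightarrow> 'q option) \<Rightarrow> 'q set \<Rightarrow> nat \<Rightarrow> 'q \<Rightarrow> 'e list set" where
  "aug_lang Sig dH QH N q0 = lang (aug_delta Sig dH QH N) (Some q0)"

definition proj :: "'e set \<Rightarrow> 'e list \<Rightarrow> 'e list" where
  "proj A s = filter (\<lambda>e. e \<in> A) s"

definition trunc :: "'e list \<Rightarrow> nat \<Rightarrow> 'e list" where
  "trunc s m = take (length s - m) s"

definition Theta :: "'e set \<Rightarrow> nat \<Rightarrow> 'e list \<Rightarrow> 'e list set" where
  "Theta A N s = {proj A (trunc s m) | m. m \<le> N}"

definition Theta_inv :: "'e list set \<Rightarrow> 'e set \<Rightarrow> nat \<Rightarrow> 'e list set \<Rightarrow> 'e list set" where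
  "Theta_inv LG A N T = (\<Union>t\<in>T. {u \<in> LG. t \<in> Theta A N u})"

definition append_ev :: "'e list set \<Rightarrow> 'e \<Rightarrow> 'e list set" where
  "append_ev K \<sigma> = {u @ [\<sigma>] | u. u \<in> K}"

definition Ic :: "nat \<Rightarrow> (nat \<Rightarrow> 'e set) \<Rightarrow> 'e \<Rightarrow> nat set" where
  "Ic n Sc \<sigma> = {i \<in> {1..n}. \<sigma> \<in> Sc i}"

definition delay_coobservable ::
  "'e list set \<Rightarrow> 'e list set \<Rightarrow> nat \<Rightarrow> (nat \<Rightarrow> 'e set) \<Rightarrow> (nat \<Rightarrow> 'e set) \<Rightarrow> (nat \<Rightarrow> nat) \<Rightarrow> 'e \<Rightarrow> bool" where
  "delay_coobservable LH LG n So Sc No \<sigma> \<longleftrightarrow>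
     (\<forall>s \<in> LH. s @ [\<sigma>] \<in> LG - LH \<longrightarrow>
        (\<exists>i \<in> Ic n Sc \<sigma>.
           append_ev (Theta_inv LG (So i) (No i) (Theta (So i) (No i) s)) \<sigma> \<inter> LH = {}))"

(* T^sigma_conf(s): tuples (s_i)_{i in I^c(sigma)} of strings over Sig, represented by functions nat => string
   (values outside I^c(sigma) are irrelevant) *)
definition T_conf :: "'e set \<Rightarrow> nat \<Rightarrow> (nat \<Rightarrow> 'e set) \<Rightarrow> (nat \<Rightarrow> 'e set) \<Rightarrow> (nat \<Rightarrow> nat) \<Rightarrow> 'e \<Rightarrow> 'e list
                     \<Rightarrow> (nat \<Rightarrow> 'e list) set" where
  "T_conf Sig n So Sc No \<sigma> s =
     {t. \<forall>i \<in> Ic n Sc \<sigma>. t i \<in> lists Sig \<and> proj (So i) (t i) \<in> Theta (So i) (No i) s}"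

end

theory Submission
  imports Defs
begin

lemma ds_append:
  "delta_star d q (s @ t) = (case delta_star d q s of None \<Rightarrow> None | Some q' \<Rightarrow> delta_star d q' t)"
  by (induction s arbitrary: q) (auto split: option.splits)

lemma ds_sub_QH:
  "delta_star (sub_delta d QH) q s = Some q' \<Longrightarrow> q \<in> QH \<Longrightarrow> q' \<in> QH"
  by (induction s arbitrary: q) (auto simp: sub_delta_def split: option.splits if_splits)

lemma ds_sub_d:
  "delta_star (sub_delta d QH) q s = Some q' \<Longrightarrow> delta_star d q s = Some q'"
  by (induction s arbitrary: q) (auto simp: sub_delta_def split: option.splits if_splits)

lemma ds_lists:
  "dfa Q Sig d q0 \<Longrightarrow> delta_star d q s = Some q' \<Longrightarrow> s \<in> lists Sig"
  by (induction s arbitrary: q) (auto simp: dfa_def split: option.splits)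

lemma sub_lists:
  "dfa Q Sig d q0 \<Longrightarrow> delta_star (sub_delta d QH) q s \<noteq> None \<Longrightarrow> s \<in> lists Sig"
proof -
  assume a: "dfa Q Sig d q0" "delta_star (sub_delta d QH) q s \<noteq> None"
  then obtain q' where "delta_star (sub_delta d QH) q s = Some q'" by blast
  then have "delta_star d q s = Some q'" by (rule ds_sub_d)
  then show ?thesis using ds_lists[OF a(1)] by blast
qed

lemma aug_fwd:
  "q \<in> QH \<Longrightarrow> s \<in> lists Sig \<Longrightarrow> delta_star dH q s = Some q' \<Longrightarrow>
   (\<And>q e q'. dH q e = Some q' \<Longrightarrow> q \<in> QH \<Longrightarrow> q' \<in> QH) \<Longrightarrow>
   delta_star (aug_delta Sig dH QH N) (Some q) s = Some (Some q')"
proof (induction s arbitrary: q)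
  case Nil then show ?case by simp
next
  case (Cons e s)
  from Cons.prems(3) obtain q1 where q1: "dH q e = Some q1" "delta_star dH q1 s = Some q'"
    by (auto split: option.splits)
  have "q1 \<in> QH" using Cons.prems(4)[OF q1(1) Cons.prems(1)] .
  moreover have "aug_delta Sig dH QH N (Some q) e = Some (Some q1)"
    using q1(1) Cons.prems(1,2) by (auto simp: aug_delta_def active_def)
  ultimately show ?case using Cons q1 by auto
qed

lemma aug_None: "s \<noteq> [] \<Longrightarrow> delta_star (aug_delta Sig dH QH N) None s = None"
  by (cases s) (auto simp: aug_delta_def)

lemma aug_back:
  "delta_star (aug_delta Sig dH QH N) (Some q) (t @ [\<sigma>]) \<noteq> None \<Longrightarrow>
   \<exists>q'. delta_star dH q t = Some q' \<and> aug_delta Sig dH QH N (Some q') \<sigma> \<noteq> None"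
proof (induction t arbitrary: q)
  case Nil then show ?case by (auto split: option.splits)
next
  case (Cons e t)
  then obtain x where x: "aug_delta Sig dH QH N (Some q) e = Some x"
    "delta_star (aug_delta Sig dH QH N) x (t @ [\<sigma>]) \<noteq> None"
    by (auto split: option.splits)
  show ?case
  proof (cases x)
    case None then show ?thesis using x(2) aug_None[of "t @ [\<sigma>]" Sig dH QH N] by simp
  next
    case (Some q1)
    have "map_option Some (dH q e) = Some (Some q1)" using x(1) Some unfolding aug_delta_def
      by (simp split: if_splits)
    then have dq: "dH q e = Some q1" by (cases "dH q e") auto
    have "delta_star (aug_delta Sig dH QH N) (Some q1) (t @ [\<sigma>]) \<noteq> None" using x(2) Some by simp
    from Cons.IH[OF this] obtain q' where "delta_star dH q1 t = Some q'"
      "aug_delta Sig dH QH N (Some q') \<sigma> \<noteq> None" by blast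
    then show ?thesis using dq by simp
  qed
qed

lemma Theta_mem: "x \<in> Theta A N s \<longleftrightarrow> (\<exists>m\<le>N. x = proj A (trunc s m))"
  by (auto simp: Theta_def)

theorem theorem1:
  fixes Q :: "'q set" and Sig :: "'e set" and d :: "'q \<Rightarrow> 'e \<Rightarrow> 'q option" and q0 :: 'q
    and QH :: "'q set" and n :: nat and So Sc :: "nat \<Rightarrow> 'e set" and No :: "nat \<Rightarrow> nat"
    and \<sigma> :: 'e
  assumes "dfa Q Sig d q0"
    and "QH \<subseteq> Q" and "q0 \<in> QH"
    and "\<forall>i \<in> {1..n}. So i \<subseteq> Sig \<and> Sc i \<subseteq> Sig"
    and "\<sigma> \<in> (\<Union>i \<in> {1..n}. Sc i)"
  shows "delay_coobservable (lang (sub_delta d QH) q0) (lang d q0) n So Sc No \<sigma> \<longleftrightarrow>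
    (\<forall>s \<in> lang (sub_delta d QH) q0.
       s @ [\<sigma>] \<in> lang d q0 - lang (sub_delta d QH) q0 \<longrightarrow>
       (\<forall>t \<in> T_conf Sig n So Sc No \<sigma> s.
          \<exists>i \<in> Ic n Sc \<sigma>. t i @ [\<sigma>] \<notin> aug_lang Sig (sub_delta d QH) QH (No i) q0))"
proof -
  define dH where "dH = sub_delta d QH"
  note dfa = assms(1)
  have stepQH: "\<And>q e q'. dH q e = Some q' \<Longrightarrow> q \<in> QH \<Longrightarrow> q' \<in> QH"
    by (auto simp: dH_def sub_delta_def split: option.splits if_splits)
  have LHG: "u \<in> lang d q0" if "u \<in> lang dH q0" for u
  proof -
    from that obtain q where "delta_star dH q0 u = Some q" unfolding lang_def by blast
    then have "delta_star d q0 u = Some q" unfolding dH_def by (rule ds_sub_d)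
    then show ?thesis unfolding lang_def by simp
  qed
  have augI: "x @ [\<sigma>] \<in> aug_lang Sig dH QH N q0"
    if "delta_star dH q0 (x @ s' @ [\<sigma>]) \<noteq> None" "length s' \<le> N" for x s' N
  proof -
    from that(1) obtain q' where q': "delta_star dH q0 x = Some q'"
      and r: "delta_star dH q' (s' @ [\<sigma>]) \<noteq> None"
      by (auto simp: ds_append split: option.splits)
    from r obtain q'' where q'': "delta_star dH q' s' = Some q''" "dH q'' \<sigma> \<noteq> None"
      by (auto simp: ds_append split: option.splits)
    have xl: "x @ s' @ [\<sigma>] \<in> lists Sig"
      using sub_lists[OF dfa that(1)[unfolded dH_def]] .
    have q'QH: "q' \<in> QH" using ds_sub_QH[OF q'[unfolded dH_def] assms(3)] .
    have xl2: "x \<in> lists Sig" using xl by simp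
    have "delta_star (aug_delta Sig dH QH N) (Some q0) x = Some (Some q')"
      by (rule aug_fwd[OF assms(3) xl2 q' stepQH])
    moreover have "aug_delta Sig dH QH N (Some q') \<sigma> \<noteq> None"
    proof (cases "\<sigma> \<in> active dH q'")
      case True
      then show ?thesis using q'QH xl unfolding aug_delta_def active_def by auto
    next
      case False
      have "\<sigma> \<in> Sig" using xl by simp
      moreover have "s' \<in> lists Sig" using xl by simp
      moreover have "\<exists>s' \<in> lists Sig. length s' \<le> N \<and>
                       (\<exists>q'a. delta_star dH q' s' = Some q'a \<and> \<sigma> \<in> active dH q'a)"
        using q'' that(2) \<open>s' \<in> lists Sig\<close> unfolding active_def by blast
      ultimately show ?thesis using q'QH False unfolding aug_delta_def by simp
    qed
    ultimately show ?thesis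
      by (auto simp: aug_lang_def lang_def ds_append split: option.splits)
  qed
  have augE: "\<exists>s'. length s' \<le> N \<and> x @ s' @ [\<sigma>] \<in> lang dH q0"
    if "x @ [\<sigma>] \<in> aug_lang Sig dH QH N q0" for x N
  proof -
    from that aug_back obtain q' where q': "delta_star dH q0 x = Some q'"
      and a: "aug_delta Sig dH QH N (Some q') \<sigma> \<noteq> None"
      unfolding aug_lang_def lang_def by fastforce
    from a have "\<exists>s'. length s' \<le> N \<and> (\<exists>q''. delta_star dH q' s' = Some q'' \<and> \<sigma> \<in> active dH q'')"
    proof (cases "\<sigma> \<in> active dH q'")
      case True
      then show ?thesis by (intro exI[of _ "[]"]) simp
    next
      case False
      then show ?thesis using a unfolding aug_delta_def by (auto split: if_splits)
    qed
    then obtain s' q'' where "length s' \<le> N" "delta_star dH q' s' = Some q''" "\<sigma> \<in> active dH q''"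
      by blast
    then show ?thesis using q'
      by (intro exI[of _ s']) (auto simp: lang_def ds_append active_def split: option.splits)
  qed
  show ?thesis
    unfolding dH_def[symmetric]
  proof
    assume co: "delay_coobservable (lang dH q0) (lang d q0) n So Sc No \<sigma>"
    show "\<forall>s \<in> lang dH q0. s @ [\<sigma>] \<in> lang d q0 - lang dH q0 \<longrightarrow>
       (\<forall>t \<in> T_conf Sig n So Sc No \<sigma> s.
          \<exists>i \<in> Ic n Sc \<sigma>. t i @ [\<sigma>] \<notin> aug_lang Sig dH QH (No i) q0)"
    proof (intro ballI impI)
      fix s t assume s: "s \<in> lang dH q0" "s @ [\<sigma>] \<in> lang d q0 - lang dH q0"
        and t: "t \<in> T_conf Sig n So Sc No \<sigma> s"
      from co s obtain i where i: "i \<in> Ic n Sc \<sigma>"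
        and e: "append_ev (Theta_inv (lang d q0) (So i) (No i) (Theta (So i) (No i) s)) \<sigma> \<inter> lang dH q0 = {}"
        unfolding delay_coobservable_def by blast
      show "\<exists>i \<in> Ic n Sc \<sigma>. t i @ [\<sigma>] \<notin> aug_lang Sig dH QH (No i) q0"
      proof (rule bexI[OF _ i], rule notI)
        assume "t i @ [\<sigma>] \<in> aug_lang Sig dH QH (No i) q0"
        from augE[OF this] obtain s' where s': "length s' \<le> No i" "t i @ s' @ [\<sigma>] \<in> lang dH q0"
          by blast
        define u where "u = t i @ s'"
        have uLH: "u @ [\<sigma>] \<in> lang dH q0" using s' u_def by simp
        have "u \<in> lang dH q0" using uLH
          by (auto simp: lang_def ds_append split: option.splits)
        hence uG: "u \<in> lang d q0" using LHG by blast
        have tr: "trunc u (length s') = t i" by (simp add: trunc_def u_def)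
        have inT: "proj (So i) (t i) \<in> Theta (So i) (No i) s" using t i by (auto simp: T_conf_def)
        have "proj (So i) (t i) \<in> Theta (So i) (No i) u"
          unfolding Theta_mem using s'(1) tr by metis
        hence "u \<in> Theta_inv (lang d q0) (So i) (No i) (Theta (So i) (No i) s)"
          using inT uG unfolding Theta_inv_def by blast
        hence "u @ [\<sigma>] \<in> append_ev (Theta_inv (lang d q0) (So i) (No i) (Theta (So i) (No i) s)) \<sigma>"
          unfolding append_ev_def by blast
        with uLH e show False by blast
      qed
    qed
  next
    assume R: "\<forall>s \<in> lang dH q0. s @ [\<sigma>] \<in> lang d q0 - lang dH q0 \<longrightarrow>
       (\<forall>t \<in> T_conf Sig n So Sc No \<sigma> s.
          \<exists>i \<in> Ic n Sc \<sigma>. t i @ [\<sigma>] \<notin> aug_lang Sig dH QH (No i) q0)"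
    show "delay_coobservable (lang dH q0) (lang d q0) n So Sc No \<sigma>"
      unfolding delay_coobservable_def
    proof (intro ballI impI, rule ccontr)
      fix s assume s: "s \<in> lang dH q0" "s @ [\<sigma>] \<in> lang d q0 - lang dH q0"
      let ?A = "\<lambda>i. append_ev (Theta_inv (lang d q0) (So i) (No i) (Theta (So i) (No i) s)) \<sigma>"
      assume "\<not> (\<exists>i\<in>Ic n Sc \<sigma>. ?A i \<inter> lang dH q0 = {})"
      then have ne: "?A i \<inter> lang dH q0 \<noteq> {}" if "i \<in> Ic n Sc \<sigma>" for i
        using that by blast
      let ?P = "\<lambda>i x. x \<in> lists Sig \<and> proj (So i) x \<in> Theta (So i) (No i) s
                     \<and> x @ [\<sigma>] \<in> aug_lang Sig dH QH (No i) q0"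
      have ex: "\<exists>x. ?P i x" if i: "i \<in> Ic n Sc \<sigma>" for i
      proof -
        from ne[OF i] obtain w where w: "w \<in> ?A i" "w \<in> lang dH q0" by blast
        from w(1) obtain u where wu: "w = u @ [\<sigma>]"
          and uT: "u \<in> Theta_inv (lang d q0) (So i) (No i) (Theta (So i) (No i) s)"
          unfolding append_ev_def by blast
        from uT obtain y where y: "y \<in> Theta (So i) (No i) s" "u \<in> lang d q0"
            "y \<in> Theta (So i) (No i) u"
          unfolding Theta_inv_def by blast
        from y(3) obtain m where m1: "m \<le> No i" and ym: "y = proj (So i) (trunc u m)"
          unfolding Theta_mem by blast
        have m2: "proj (So i) (trunc u m) \<in> Theta (So i) (No i) s" using y(1) ym by simp
        define x where "x = trunc u m"
        define s' where "s' = drop (length u - m) u"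
        have us: "u = x @ s'" by (simp add: x_def s'_def trunc_def)
        have ls: "length s' \<le> No i" using m1 by (simp add: s'_def)
        have "x @ s' @ [\<sigma>] \<in> lang dH q0" using w(2) wu us by simp
        then have dn: "delta_star dH q0 (x @ s' @ [\<sigma>]) \<noteq> None" by (simp add: lang_def)
        have "x @ s' @ [\<sigma>] \<in> lists Sig"
          using sub_lists[OF dfa dn[unfolded dH_def]] .
        hence "x \<in> lists Sig" by simp
        moreover have "x @ [\<sigma>] \<in> aug_lang Sig dH QH (No i) q0" using augI[OF dn ls] .
        moreover have "proj (So i) x \<in> Theta (So i) (No i) s" using m2 x_def by simp
        ultimately show ?thesis by blast
      qed
      define t where "t = (\<lambda>i. SOME x. ?P i x)"
      have tP: "?P i (t i)" if "i \<in> Ic n Sc \<sigma>" for i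
        unfolding t_def using someI_ex[OF ex[OF that]] .
      have "t \<in> T_conf Sig n So Sc No \<sigma> s" unfolding T_conf_def using tP by blast
      with R s obtain i where "i \<in> Ic n Sc \<sigma>" "t i @ [\<sigma>] \<notin> aug_lang Sig dH QH (No i) q0"
        by blast
      with tP show False by blast
    qed
  qed
qed

end
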